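(* Let $\mathcal U\subset\mathbb C$ be a neighborhood and $L(x,\partial)$ an $r$th order differential operator with coefficients analytic on $\mathcal U$. Let $\mathcal V\subset\mathbb C$ be open and $\psi_1(x,z),\dots,\psi_r(x,z)$ functions analytic on $\mathcal U\times\mathcal V$ such that (i) $L(\psi_i)=z\psi_i$ for $i=1,\dots,r$, and (ii) for every $\lambda\in\mathcal V$ the functions $\psi_1(x,\lambda),\dots,\psi_r(x,\lambda)$ of $x$ are linearly independent. Let $\mathcal O(\mathcal U)$ be the space of analytic functions on $\mathcal U$ and $\mathcal S(\mathcal V)\subset\mathcal S$ the space of finitely supported distributions with support in $\mathcal V$. Then the linear map $\mathcal S(\mathcal V)^r\to\mathcal O(\mathcal U)$, $(c_1,\dots,c_r)\mapsto\sum_i c_i(\psi_i)$, is injective.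
   Context: $\mathcal S$ denotes the space of finitely supported distributions in the $z$-plane: finite linear combinations of $\delta_\lambda\circ\partial_z^j$ ($\lambda\in\mathbb C$, $j\ge0$), where $\delta_\lambda$ evaluates its argument at $z=\lambda$; applied to a function $\psi(x,z)$ such a distribution acts in the $z$ variable and yields a function of $x$. The support of such a distribution is the set of points $\lambda$ occurring with nonzero coefficient. *)

theory Defs
  imports "HOL-Complex_Analysis.Complex_Analysis" "HOL-Library.FuncSet"
begin

text \<open>A finitely supported distribution in the z-plane is represented by its coefficient
function c, where c lam j is the coefficient of delta_lam composed with d^j/dz^j.\<close>

definition fsupp_dist :: "(complex \<Rightarrow> nat \<Rightarrow> complex) \<Rightarrow> bool" where
  "fsupp_dist c \<longleftrightarrow> finite {(lam, j). c lam j \<noteq> 0}"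

definition dist_support :: "(complex \<Rightarrow> nat \<Rightarrow> complex) \<Rightarrow> complex set" where
  "dist_support c = {lam. \<exists>j. c lam j \<noteq> 0}"

definition dist_space :: "complex set \<Rightarrow> (complex \<Rightarrow> nat \<Rightarrow> complex) set" where
  "dist_space V = {c. fsupp_dist c \<and> dist_support c \<subseteq> V}"

definition dist_apply :: "(complex \<Rightarrow> nat \<Rightarrow> complex) \<Rightarrow> (complex \<Rightarrow> complex \<Rightarrow> complex)
    \<Rightarrow> complex \<Rightarrow> complex" where
  "dist_apply c psi x = (\<Sum>(lam, j)\<in>{(lam, j). c lam j \<noteq> 0}. c lam j * (deriv ^^ j) (psi x) lam)"

text \<open>Analytic (holomorphic) function of two complex variables on U x V:
jointly continuous and holomorphic in each variable separately (Osgood).\<close>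
definition holomorphic2_on :: "(complex \<Rightarrow> complex \<Rightarrow> complex) \<Rightarrow> complex set \<Rightarrow> complex set \<Rightarrow> bool" where
  "holomorphic2_on f U V \<longleftrightarrow> continuous_on (U \<times> V) (\<lambda>(x, z). f x z)
     \<and> (\<forall>z\<in>V. (\<lambda>x. f x z) holomorphic_on U) \<and> (\<forall>x\<in>U. (\<lambda>z. f x z) holomorphic_on V)"

definition diff_op :: "nat \<Rightarrow> (nat \<Rightarrow> complex \<Rightarrow> complex) \<Rightarrow> (complex \<Rightarrow> complex) \<Rightarrow> complex \<Rightarrow> complex" where
  "diff_op r a g x = (\<Sum>k\<le>r. a k x * (deriv ^^ k) g x)"

end

theory Submission
  imports Defs
begin

definition Dx :: "(complex \<Rightarrow> complex \<Rightarrow> complex) \<Rightarrow> complex \<Rightarrow> complex \<Rightarrow> complex" where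
  "Dx F x z = deriv (\<lambda>x. F x z) x"

lemma circ_norm: "\<delta> \<ge> 0 \<Longrightarrow> norm (circlepath c \<delta> t - c) = \<delta>"
  by (simp add: circlepath norm_mult)

lemma circ_cont: "continuous_on A (circlepath c \<delta>)"
  unfolding circlepath by (intro continuous_intros)

lemma vd_cont: "continuous_on A (\<lambda>t. vector_derivative (circlepath c \<delta>) (at t))"
  unfolding vector_derivative_circlepath by (intro continuous_intros)

lemma Dx_rep:
  assumes hol: "(\<lambda>x. F x z) holomorphic_on U" and U: "open U" and sub: "cball x0 \<delta> \<subseteq> U"
    and x: "x \<in> ball x0 \<delta>"
  shows "Dx F x z = integral (cbox 0 1) (\<lambda>t. F (circlepath x0 \<delta> t) z *
     vector_derivative (circlepath x0 \<delta>) (at t) / (circlepath x0 \<delta> t - x)^2 / (2 * of_real pi * \<i>))"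
proof -
  have "((\<lambda>x. F x z) has_field_derivative (1 / (2 * of_real pi * \<i>) * contour_integral (circlepath x0 \<delta>) (\<lambda>u. F u z / (u-x)^2))) (at x)"
  proof (rule Cauchy_derivative_integral_circlepath(2)[OF _ _ x])
    show "continuous_on (cball x0 \<delta>) (\<lambda>x. F x z)"
      using hol sub holomorphic_on_imp_continuous_on holomorphic_on_subset by blast
    show "(\<lambda>x. F x z) holomorphic_on ball x0 \<delta>"
      using hol sub ball_subset_cball holomorphic_on_subset by blast
  qed
  then have "Dx F x z = 1 / (2 * of_real pi * \<i>) * contour_integral (circlepath x0 \<delta>) (\<lambda>u. F u z / (u-x)^2)"
    unfolding Dx_def by (rule DERIV_imp_deriv)
  also have "\<dots> = integral (cbox 0 1) (\<lambda>t. F (circlepath x0 \<delta> t) z *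
     vector_derivative (circlepath x0 \<delta>) (at t) / (circlepath x0 \<delta> t - x)^2 / (2 * of_real pi * \<i>))"
    unfolding contour_integral_integral cbox_interval
    by (simp add: integral_mult_right[symmetric] del: integral_mult_right) (simp add: field_simps)
  finally show ?thesis .
qed

lemma Dx_cont:
  assumes h: "holomorphic2_on F U V" and U: "open U" and V: "open V"
  shows "continuous_on (U \<times> V) (\<lambda>(x,z). Dx F x z)"
proof -
  have "isCont (\<lambda>(x,z). Dx F x z) (x0,z0)" if x0: "x0 \<in> U" and z0: "z0 \<in> V" for x0 z0
  proof -
    obtain \<delta> where d: "\<delta> > 0" "cball x0 \<delta> \<subseteq> U"
      using U x0 open_contains_cball by blast
    define \<gamma> where "\<gamma> = circlepath x0 \<delta>"
    define K where "K = (\<lambda>(p::complex\<times>complex) t. F (\<gamma> t) (snd p) *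
       vector_derivative \<gamma> (at t) / (\<gamma> t - fst p)^2 / (2 * of_real pi * \<i>))"
    have rep: "Dx F x z = integral (cbox 0 1) (K (x,z))" if "x \<in> ball x0 \<delta>" "z \<in> V" for x z
      unfolding K_def \<gamma>_def using Dx_rep[OF _ U d(2) that(1)] h that unfolding holomorphic2_on_def by auto
    have gS: "\<gamma> t \<in> U" for t
      using d circ_norm[of \<delta> x0 t] unfolding \<gamma>_def by (auto simp: dist_norm norm_minus_commute)
    have Fc: "continuous_on (U \<times> V) (\<lambda>(x,z). F x z)" using h unfolding holomorphic2_on_def by auto
    have "continuous_on ((ball x0 \<delta> \<times> V) \<times> cbox 0 1) (\<lambda>(p, t). K p t)"
    proof -
      have c1: "continuous_on ((ball x0 \<delta> \<times> V) \<times> cbox 0 1) (\<lambda>(p, t). F (\<gamma> t) (snd p))"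
      proof -
        have "continuous_on ((ball x0 \<delta> \<times> V) \<times> cbox 0 1) ((\<lambda>(x,z). F x z) \<circ> (\<lambda>(p, t). (\<gamma> t, snd p)))"
          apply (rule continuous_on_compose)
          subgoal unfolding \<gamma>_def case_prod_unfold by (intro continuous_intros continuous_on_compose2[OF circ_cont]) auto
          subgoal by (rule continuous_on_subset[OF Fc]) (auto simp: gS)
          done
        then show ?thesis by (simp add: o_def case_prod_unfold)
      qed
      have ne: "\<gamma> t - x \<noteq> 0" if "x \<in> ball x0 \<delta>" for x t
        using that circ_norm[of \<delta> x0 t] d unfolding \<gamma>_def by (auto simp: dist_norm norm_minus_commute)
      have ne': "dist x0 (\<gamma> t) = \<delta>" for t
        using circ_norm[of \<delta> x0 t] d unfolding \<gamma>_def by (auto simp: dist_norm norm_minus_commute)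
      have c2: "continuous_on ((ball x0 \<delta> \<times> V) \<times> cbox 0 1) (\<lambda>x. vector_derivative \<gamma> (at (snd x)))"
        unfolding \<gamma>_def by (rule continuous_on_compose2[OF vd_cont continuous_on_snd]) auto
      have c3: "continuous_on ((ball x0 \<delta> \<times> V) \<times> cbox 0 1) (\<lambda>x. \<gamma> (snd x) - fst (fst x))"
        unfolding \<gamma>_def by (intro continuous_intros continuous_on_compose2[OF circ_cont continuous_on_snd]) auto
      show ?thesis unfolding K_def case_prod_unfold
        using c1 unfolding case_prod_unfold
        by (intro continuous_on_divide continuous_on_mult c2 continuous_on_power c3 continuous_on_const) (auto simp: ne')
    qed
    then have "continuous_on (ball x0 \<delta> \<times> V) (\<lambda>p. integral (cbox 0 1) (K p))"
      by (rule integral_continuous_on_param)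
    then have "continuous_on (ball x0 \<delta> \<times> V) (\<lambda>(x,z). Dx F x z)"
      by (rule continuous_on_eq) (auto simp: rep)
    then show ?thesis
      using d z0 by (auto simp: continuous_on_eq_continuous_at[OF open_Times[OF open_ball V]])
  qed
  then show ?thesis
    by (auto simp: continuous_on_eq_continuous_at[OF open_Times[OF U V]])
qed

lemma leib_x:
  assumes h: "holomorphic2_on F U V" and U: "open U" and V: "open V" and x0: "x0 \<in> U"
    and g: "continuous_on (cbox 0 1) \<gamma>" "\<And>t. t \<in> cbox 0 1 \<Longrightarrow> \<gamma> t \<in> V"
    and w: "continuous_on (cbox 0 1) w"
  shows "((\<lambda>x. integral (cbox 0 (1::real)) (\<lambda>t. F x (\<gamma> t) * w t)) has_field_derivative
           integral (cbox 0 1) (\<lambda>t. Dx F x0 (\<gamma> t) * w t)) (at x0)"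
proof -
  obtain \<delta> where d: "\<delta> > 0" "ball x0 \<delta> \<subseteq> U"
    using U x0 open_contains_ball by blast
  have Fc: "continuous_on (U \<times> V) (\<lambda>(x,z). F x z)" using h unfolding holomorphic2_on_def by auto
  have Dc: "continuous_on (U \<times> V) (\<lambda>(x,z). Dx F x z)" by (rule Dx_cont[OF h U V])
  have "((\<lambda>x. integral (cbox 0 (1::real)) (\<lambda>t. F x (\<gamma> t) * w t)) has_field_derivative
           integral (cbox 0 1) (\<lambda>t. Dx F x0 (\<gamma> t) * w t)) (at x0 within ball x0 \<delta>)"
  proof (rule leibniz_rule_field_derivative)
    fix x t assume x: "x \<in> ball x0 \<delta>" and t: "t \<in> cbox (0::real) 1"
    have "(\<lambda>x. F x (\<gamma> t)) holomorphic_on U" using h g(2)[OF t] unfolding holomorphic2_on_def by auto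
    then have "((\<lambda>x. F x (\<gamma> t)) has_field_derivative Dx F x (\<gamma> t)) (at x)"
      unfolding Dx_def using x d(2) by (intro holomorphic_derivI[OF _ U]) auto
    then show "((\<lambda>x. F x (\<gamma> t) * w t) has_field_derivative Dx F x (\<gamma> t) * w t) (at x within ball x0 \<delta>)"
      by (rule has_field_derivative_at_within[OF DERIV_cmult_right])
  next
    fix x assume x: "x \<in> ball x0 \<delta>"
    have "continuous_on (cbox 0 1) (\<lambda>t. F x (\<gamma> t))"
    proof (rule continuous_on_compose2[of "V" "F x"])
      show "continuous_on V (F x)" using h x d(2) unfolding holomorphic2_on_def
        by (metis holomorphic_on_imp_continuous_on subsetD)
    qed (use g in auto)
    then show "(\<lambda>t. F x (\<gamma> t) * w t) integrable_on cbox 0 1"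
      by (intro integrable_continuous continuous_on_mult w)
  next
    have "continuous_on (ball x0 \<delta> \<times> cbox 0 1) (\<lambda>p. Dx F (fst p) (\<gamma> (snd p)))"
    proof -
      have c_in: "continuous_on (ball x0 \<delta> \<times> cbox 0 1) (\<lambda>p. (fst p, \<gamma> (snd p)))"
        by (intro continuous_on_Pair continuous_on_fst continuous_on_id continuous_on_compose2[OF g(1) continuous_on_snd]) auto
      have im: "(\<lambda>p. (fst p, \<gamma> (snd p))) ` (ball x0 \<delta> \<times> cbox 0 1) \<subseteq> U \<times> V" using d g by auto
      show ?thesis using continuous_on_compose2[OF Dc c_in im] by simp
    qed
    then show "continuous_on (ball x0 \<delta> \<times> cbox 0 1) (\<lambda>(x, t). Dx F x (\<gamma> t) * w t)"
      unfolding case_prod_unfold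
      by (intro continuous_on_mult continuous_on_compose2[OF w continuous_on_snd]) auto
  qed (use d in auto)
  then show ?thesis using at_within_open[of x0 "ball x0 \<delta>"] d by simp
qed

lemma leib_cauchy:
  fixes g :: "real \<Rightarrow> complex"
  assumes g: "continuous_on (cbox 0 1) g" and ga: "continuous_on (cbox 0 1) \<gamma>"
    and r: "\<And>t. t \<in> cbox 0 1 \<Longrightarrow> dist z0 (\<gamma> t) = r" and r0: "r > 0"
  shows "((\<lambda>z. integral (cbox 0 (1::real)) (\<lambda>t. g t / (\<gamma> t - z))) has_field_derivative
           integral (cbox 0 1) (\<lambda>t. g t / (\<gamma> t - z0)^2)) (at z0)"
proof -
  have ne: "\<gamma> t - z \<noteq> 0" if "t \<in> cbox 0 1" "z \<in> ball z0 r" for t z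
    using r[OF that(1)] that(2) by (auto simp: dist_commute)
  have "((\<lambda>z. integral (cbox 0 (1::real)) (\<lambda>t. g t / (\<gamma> t - z))) has_field_derivative
           integral (cbox 0 1) (\<lambda>t. g t / (\<gamma> t - z0)^2)) (at z0 within ball z0 r)"
  proof (rule leibniz_rule_field_derivative[where f="\<lambda>z t. g t / (\<gamma> t - z)" and fx="\<lambda>z t. g t / (\<gamma> t - z)^2"])
    fix z t assume z: "z \<in> ball z0 r" and t: "t \<in> cbox (0::real) 1"
    have "((\<lambda>z. g t / (\<gamma> t - z)) has_field_derivative g t / (\<gamma> t - z)^2) (at z)"
      using ne[OF t z] by (auto intro!: derivative_eq_intros simp: power2_eq_square field_simps)
    then show "((\<lambda>z. g t / (\<gamma> t - z)) has_field_derivative g t / (\<gamma> t - z)^2) (at z within ball z0 r)"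
      by (rule has_field_derivative_at_within)
  next
    fix z assume z: "z \<in> ball z0 r"
    show "(\<lambda>t. g t / (\<gamma> t - z)) integrable_on cbox 0 1"
      by (intro integrable_continuous continuous_on_divide g continuous_on_diff ga continuous_on_const)
        (use ne z in auto)
  next
    show "continuous_on (ball z0 r \<times> cbox 0 1) (\<lambda>(z, t). g t / (\<gamma> t - z)^2)"
      unfolding case_prod_unfold
      by (intro continuous_on_divide continuous_on_power continuous_on_diff continuous_on_fst
           continuous_on_compose2[OF g continuous_on_snd] continuous_on_compose2[OF ga continuous_on_snd])
         (use ne in auto)
  qed (use r0 in auto)
  then show ?thesis using at_within_open[of z0 "ball z0 r"] r0 by simp
qed

definition Dz :: "(complex \<Rightarrow> complex \<Rightarrow> complex) \<Rightarrow> complex \<Rightarrow> complex \<Rightarrow> complex" where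
  "Dz F x z = deriv (F x) z"

lemma mixed:
  assumes h: "holomorphic2_on F U V" and U: "open U" and V: "open V" and x0: "x0 \<in> U" and z0: "z0 \<in> V"
  shows "\<exists>J. ((\<lambda>z. Dx F x0 z) has_field_derivative J) (at z0) \<and> ((\<lambda>x. Dz F x z0) has_field_derivative J) (at x0)"
proof -
  obtain \<rho> where r: "\<rho> > 0" "cball z0 \<rho> \<subseteq> V"
    using V z0 open_contains_cball by blast
  define \<gamma> where "\<gamma> = circlepath z0 \<rho>"
  define c where "c = 2 * of_real pi * \<i>"
  define vd where "vd = (\<lambda>t. vector_derivative \<gamma> (at t))"
  have c0: "c \<noteq> 0" by (simp add: c_def)
  have dg: "dist z0 (\<gamma> t) = \<rho>" for t
    using circ_norm[of \<rho> z0 t] r unfolding \<gamma>_def by (auto simp: dist_norm norm_minus_commute)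
  have gV: "\<gamma> t \<in> V" for t using dg r by auto
  have gc: "continuous_on A \<gamma>" for A unfolding \<gamma>_def by (rule circ_cont)
  have vc: "continuous_on A vd" for A unfolding vd_def \<gamma>_def by (rule vd_cont)
  have ne: "\<gamma> t - z \<noteq> 0" if "z \<in> ball z0 \<rho>" for t z
    using dg[of t] that by (auto simp: dist_commute)
  have holx: "F x holomorphic_on V" if "x \<in> U" for x using h that unfolding holomorphic2_on_def by auto
  have cauchy: "F x z = integral (cbox 0 1) (\<lambda>t. F x (\<gamma> t) * (vd t / (\<gamma> t - z) / c))"
    if x: "x \<in> U" and z: "z \<in> ball z0 \<rho>" for x z
  proof -
    have "((\<lambda>u. F x u / (u - z)) has_contour_integral (c * F x z)) \<gamma>"
      unfolding \<gamma>_def c_def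
    proof (rule Cauchy_integral_circlepath)
      show "continuous_on (cball z0 \<rho>) (F x)"
        using holx[OF x] r by (meson holomorphic_on_imp_continuous_on holomorphic_on_subset)
      show "F x holomorphic_on ball z0 \<rho>"
        using holx[OF x] r ball_subset_cball by (meson holomorphic_on_subset order_trans)
      show "norm (z - z0) < \<rho>" using z by (simp add: dist_norm norm_minus_commute)
    qed
    then have "contour_integral \<gamma> (\<lambda>u. F x u / (u - z)) = c * F x z"
      by (rule contour_integral_unique)
    then have "integral (cbox 0 1) (\<lambda>t. F x (\<gamma> t) / (\<gamma> t - z) * vd t) = c * F x z"
      unfolding contour_integral_integral cbox_interval vd_def .
    moreover have "(\<lambda>t. F x (\<gamma> t) * (vd t / (\<gamma> t - z) / c)) = (\<lambda>t. (F x (\<gamma> t) / (\<gamma> t - z) * vd t) / c)"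
      by (simp add: fun_eq_iff divide_inverse mult_ac)
    moreover have "integral (cbox 0 1) (\<lambda>t. (F x (\<gamma> t) / (\<gamma> t - z) * vd t) / c) =
       integral (cbox 0 1) (\<lambda>t. F x (\<gamma> t) / (\<gamma> t - z) * vd t) / c"
      by (rule integral_divide)
    ultimately show ?thesis using c0 by (simp only:) simp
  qed
  have wc: "continuous_on (cbox 0 1) (\<lambda>t. vd t / (\<gamma> t - z) ^ k / c)" if z: "z \<in> ball z0 \<rho>" for z k
    by (intro continuous_on_divide continuous_on_power continuous_on_diff vc gc continuous_on_const)
       (use ne[OF z] c0 in auto)
  have g01: "\<And>t. t \<in> cbox 0 1 \<Longrightarrow> \<gamma> t \<in> V" using gV by auto
  have Dxz: "Dx F x0 z = integral (cbox 0 1) (\<lambda>t. Dx F x0 (\<gamma> t) * vd t / c / (\<gamma> t - z))"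
    if z: "z \<in> ball z0 \<rho>" for z
  proof -
    have "((\<lambda>x. integral (cbox 0 1) (\<lambda>t. F x (\<gamma> t) * (vd t / (\<gamma> t - z) ^ 1 / c))) has_field_derivative
           integral (cbox 0 1) (\<lambda>t. Dx F x0 (\<gamma> t) * (vd t / (\<gamma> t - z) ^ 1 / c))) (at x0)"
      by (rule leib_x[OF h U V x0 gc g01 wc[OF z]])
    then have "((\<lambda>x. F x z) has_field_derivative
           integral (cbox 0 1) (\<lambda>t. Dx F x0 (\<gamma> t) * (vd t / (\<gamma> t - z) ^ 1 / c))) (at x0)"
      by (rule has_field_derivative_transform_within_open[OF _ U x0]) (simp add: cauchy[OF _ z])
    then have "Dx F x0 z = integral (cbox 0 1) (\<lambda>t. Dx F x0 (\<gamma> t) * (vd t / (\<gamma> t - z) ^ 1 / c))"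
      unfolding Dx_def by (rule DERIV_imp_deriv)
    also have "(\<lambda>t. Dx F x0 (\<gamma> t) * (vd t / (\<gamma> t - z) ^ 1 / c)) = (\<lambda>t. Dx F x0 (\<gamma> t) * vd t / c / (\<gamma> t - z))"
      by (simp add: fun_eq_iff divide_inverse mult_ac)
    finally show ?thesis .
  qed
  have Dxc: "continuous_on V (Dx F x0)"
  proof -
    have "continuous_on V (\<lambda>z. (x0, z))" by (intro continuous_intros)
    moreover have "(\<lambda>z. (x0, z)) ` V \<subseteq> U \<times> V" using x0 by auto
    ultimately show ?thesis using continuous_on_compose2[OF Dx_cont[OF h U V], of V "\<lambda>z. (x0,z)"] by auto
  qed
  have gcont: "continuous_on (cbox 0 1) (\<lambda>t. Dx F x0 (\<gamma> t) * vd t / c)"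
    by (intro continuous_on_divide continuous_on_mult vc continuous_on_const continuous_on_compose2[OF Dxc gc])
       (use gV c0 in auto)
  have J1: "(Dx F x0 has_field_derivative integral (cbox 0 1) (\<lambda>t. Dx F x0 (\<gamma> t) * vd t / c / (\<gamma> t - z0)^2)) (at z0)"
    by (rule has_field_derivative_transform_within_open[OF leib_cauchy[OF gcont gc dg r(1)] open_ball, of z0 \<rho>])
       (use r in \<open>auto simp: Dxz\<close>)
  have Dzx: "Dz F x z0 = integral (cbox 0 1) (\<lambda>t. F x (\<gamma> t) * (vd t / (\<gamma> t - z0) ^ 2 / c))"
    if x: "x \<in> U" for x
  proof -
    have "(F x has_field_derivative (1 / c * contour_integral \<gamma> (\<lambda>u. F x u / (u-z0)^2))) (at z0)"
      unfolding \<gamma>_def c_def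
    proof (rule Cauchy_derivative_integral_circlepath(2))
      show "continuous_on (cball z0 \<rho>) (F x)"
        using holx[OF x] r by (meson holomorphic_on_imp_continuous_on holomorphic_on_subset)
      show "F x holomorphic_on ball z0 \<rho>"
        using holx[OF x] r ball_subset_cball by (meson holomorphic_on_subset order_trans)
      show "z0 \<in> ball z0 \<rho>" using r by simp
    qed
    then have "Dz F x z0 = 1 / c * integral (cbox 0 1) (\<lambda>t. F x (\<gamma> t) / (\<gamma> t - z0)^2 * vd t)"
      unfolding Dz_def contour_integral_integral cbox_interval vd_def by (rule DERIV_imp_deriv)
    also have "\<dots> = integral (cbox 0 1) (\<lambda>t. 1 / c * (F x (\<gamma> t) / (\<gamma> t - z0)^2 * vd t))"
      by (rule integral_mult_right[symmetric])
    also have "(\<lambda>t. 1 / c * (F x (\<gamma> t) / (\<gamma> t - z0)^2 * vd t)) = (\<lambda>t. F x (\<gamma> t) * (vd t / (\<gamma> t - z0) ^ 2 / c))"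
      by (simp add: fun_eq_iff divide_inverse mult_ac)
    finally show ?thesis .
  qed
  have J2: "((\<lambda>x. Dz F x z0) has_field_derivative integral (cbox 0 1) (\<lambda>t. Dx F x0 (\<gamma> t) * (vd t / (\<gamma> t - z0) ^ 2 / c))) (at x0)"
    by (rule has_field_derivative_transform_within_open[OF leib_x[OF h U V x0 gc g01 wc] U x0])
       (use r in \<open>auto simp: Dzx\<close>)
  have "(\<lambda>t. Dx F x0 (\<gamma> t) * vd t / c / (\<gamma> t - z0)^2) = (\<lambda>t. Dx F x0 (\<gamma> t) * (vd t / (\<gamma> t - z0) ^ 2 / c))"
    by (simp add: fun_eq_iff divide_inverse mult_ac)
  then show ?thesis using J1 J2 by auto
qed

lemma hol2_swap: "holomorphic2_on F U V \<Longrightarrow> holomorphic2_on (\<lambda>a b. F b a) V U"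
  unfolding holomorphic2_on_def using continuous_on_swap_args by auto

lemma Dz_swap: "Dz F x z = Dx (\<lambda>a b. F b a) z x"
  unfolding Dz_def Dx_def by simp

lemma hol2_Dx:
  assumes h: "holomorphic2_on F U V" and U: "open U" and V: "open V"
  shows "holomorphic2_on (Dx F) U V"
  unfolding holomorphic2_on_def
proof (intro conjI ballI)
  show "continuous_on (U \<times> V) (\<lambda>(x, z). Dx F x z)" by (rule Dx_cont[OF h U V])
next
  fix z assume z: "z \<in> V"
  have "(\<lambda>x. F x z) holomorphic_on U" using h z unfolding holomorphic2_on_def by auto
  then have "deriv (\<lambda>x. F x z) holomorphic_on U" by (rule holomorphic_deriv[OF _ U])
  then show "(\<lambda>x. Dx F x z) holomorphic_on U" unfolding Dx_def by simp
next
  fix x assume x: "x \<in> U"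
  show "(\<lambda>z. Dx F x z) holomorphic_on V"
    unfolding holomorphic_on_open[OF V] using mixed[OF h U V x] by blast
qed

lemma hol2_Dz:
  assumes h: "holomorphic2_on F U V" and U: "open U" and V: "open V"
  shows "holomorphic2_on (Dz F) U V"
proof -
  have "holomorphic2_on (Dx (\<lambda>a b. F b a)) V U" by (rule hol2_Dx[OF hol2_swap[OF h] V U])
  then have "holomorphic2_on (\<lambda>a b. Dx (\<lambda>a b. F b a) b a) U V" by (rule hol2_swap)
  then show ?thesis by (simp add: Dz_swap[abs_def])
qed

lemma Dcomm:
  assumes h: "holomorphic2_on F U V" and U: "open U" and V: "open V" and x: "x \<in> U" and z: "z \<in> V"
  shows "Dz (Dx F) x z = Dx (Dz F) x z"
proof -
  obtain J where J: "((\<lambda>z. Dx F x z) has_field_derivative J) (at z)" "((\<lambda>x. Dz F x z) has_field_derivative J) (at x)"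
    using mixed[OF h U V x z] by blast
  have "Dz (Dx F) x z = J" unfolding Dz_def using DERIV_imp_deriv[OF J(1)] by simp
  moreover have "Dx (Dz F) x z = J" unfolding Dx_def using DERIV_imp_deriv[OF J(2)] by simp
  ultimately show ?thesis by simp
qed

lemma Dx_cong:
  assumes U: "open U" and eq: "\<And>x z. x \<in> U \<Longrightarrow> z \<in> V \<Longrightarrow> G x z = H x z" and x: "x \<in> U" and z: "z \<in> V"
  shows "Dx G x z = Dx H x z"
proof -
  have "eventually (\<lambda>y. G y z = H y z) (nhds x)"
    using eventually_nhds_in_open[OF U x] by eventually_elim (use eq z in auto)
  then show ?thesis unfolding Dx_def by (rule deriv_cong_ev) simp
qed

lemma Dz_cong:
  assumes V: "open V" and eq: "\<And>x z. x \<in> U \<Longrightarrow> z \<in> V \<Longrightarrow> G x z = H x z" and x: "x \<in> U" and z: "z \<in> V"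
  shows "Dz G x z = Dz H x z"
  unfolding Dz_swap by (rule Dx_cong[OF V _ z x]) (use eq in auto)

lemma hol2_iter:
  assumes h: "holomorphic2_on F U V" and U: "open U" and V: "open V"
  shows "holomorphic2_on ((Dz^^j) ((Dx^^k) F)) U V"
proof -
  have hk: "holomorphic2_on ((Dx^^k) F) U V" by (induction k) (auto intro: hol2_Dx U V h)
  show ?thesis by (induction j) (auto intro: hol2_Dz U V hk)
qed

lemma comm1:
  assumes h: "holomorphic2_on F U V" and U: "open U" and V: "open V"
  shows "x \<in> U \<Longrightarrow> z \<in> V \<Longrightarrow> Dz ((Dx^^k) F) x z = (Dx^^k) (Dz F) x z"
proof (induction k arbitrary: x z)
  case 0 then show ?case by simp
next
  case (Suc k)
  have "Dz ((Dx^^Suc k) F) x z = Dz (Dx ((Dx^^k) F)) x z" by simp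
  also have "\<dots> = Dx (Dz ((Dx^^k) F)) x z"
    using Dcomm[OF hol2_iter[OF h U V, of 0 k] U V Suc.prems] by simp
  also have "\<dots> = Dx ((Dx^^k) (Dz F)) x z"
    by (rule Dx_cong[OF U _ Suc.prems]) (rule Suc.IH)
  finally show ?case by simp
qed

lemma comm:
  assumes h: "holomorphic2_on F U V" and U: "open U" and V: "open V"
  shows "x \<in> U \<Longrightarrow> z \<in> V \<Longrightarrow> (Dz^^j) ((Dx^^k) F) x z = (Dx^^k) ((Dz^^j) F) x z"
proof (induction j arbitrary: x z)
  case 0 then show ?case by simp
next
  case (Suc j)
  have "(Dz^^Suc j) ((Dx^^k) F) x z = Dz ((Dz^^j) ((Dx^^k) F)) x z" by simp
  also have "\<dots> = Dz ((Dx^^k) ((Dz^^j) F)) x z"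
    by (rule Dz_cong[OF V _ Suc.prems]) (rule Suc.IH)
  also have "\<dots> = (Dx^^k) (Dz ((Dz^^j) F)) x z"
    using comm1[OF hol2_iter[OF h U V, of j 0] U V Suc.prems] by simp
  finally show ?case by simp
qed

lemma Dx_iter: "(Dx^^k) F x z = (deriv^^k) (\<lambda>y. F y z) x"
proof (induction k arbitrary: x)
  case (Suc k)
  have "(Dx^^Suc k) F x z = deriv (\<lambda>y. (Dx^^k) F y z) x" by (simp add: Dx_def)
  also have "(\<lambda>y. (Dx^^k) F y z) = (deriv^^k) (\<lambda>y. F y z)" using Suc.IH by (simp add: fun_eq_iff)
  finally show ?case by simp
qed simp

lemma Dz_iter: "(Dz^^j) F x z = (deriv^^j) (F x) z"
proof (induction j arbitrary: z)
  case (Suc j)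
  have "(Dz^^Suc j) F x z = deriv (\<lambda>y. (Dz^^j) F x y) z" by (simp add: Dz_def)
  also have "(\<lambda>y. (Dz^^j) F x y) = (deriv^^j) (F x)" using Suc.IH by (simp add: fun_eq_iff)
  finally show ?case by simp
qed simp

lemma higher_deriv_sum_cmult:
  assumes V: "open V" and z: "z \<in> V" and fin: "finite K" and hol: "\<And>k. k \<in> K \<Longrightarrow> f k holomorphic_on V"
  shows "(deriv^^j) (\<lambda>w. \<Sum>k\<in>K. c k * f k w) z = (\<Sum>k\<in>K. c k * (deriv^^j) (f k) z)"
  using fin hol
proof (induction K rule: finite_induct)
  case empty then show ?case by simp
next
  case (insert k K)
  have h1: "(\<lambda>w. c k * f k w) holomorphic_on V" using insert by (auto intro!: holomorphic_intros)
  have h2: "(\<lambda>w. \<Sum>k\<in>K. c k * f k w) holomorphic_on V" using insert by (auto intro!: holomorphic_intros)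
  have "(deriv^^j) (\<lambda>w. \<Sum>k\<in>insert k K. c k * f k w) z = (deriv^^j) (\<lambda>w. c k * f k w + (\<Sum>k\<in>K. c k * f k w)) z"
    using insert by simp
  also have "\<dots> = (deriv^^j) (\<lambda>w. c k * f k w) z + (deriv^^j) (\<lambda>w. \<Sum>k\<in>K. c k * f k w) z"
    by (rule higher_deriv_add[OF h1 h2 V z])
  also have "(deriv^^j) (\<lambda>w. c k * f k w) z = c k * (deriv^^j) (f k) z"
    by (rule higher_deriv_cmult) (use insert V z in auto)
  finally show ?case using insert by simp
qed

lemma higher_deriv_zmult:
  assumes V: "open V" and z: "z \<in> V" and g: "g holomorphic_on V"
  shows "(deriv^^j) (\<lambda>w. w * g w) z = z * (deriv^^j) g z + of_nat j * (deriv^^(j-1)) g z"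
proof -
  have "(deriv^^j) (\<lambda>w. w * g w) z = (\<Sum>i = 0..j. of_nat (j choose i) * (deriv ^^ i) (\<lambda>w. w) z * (deriv ^^ (j-i)) g z)"
    by (rule higher_deriv_mult[OF _ g V z]) (auto intro: holomorphic_intros)
  also have "\<dots> = z * (deriv^^j) g z + of_nat j * (deriv^^(j-1)) g z"
  proof (cases j)
    case 0 then show ?thesis by simp
  next
    case (Suc m)
    have "(\<Sum>i = 0..j. of_nat (j choose i) * (deriv ^^ i) (\<lambda>w. w) z * (deriv ^^ (j-i)) g z)
       = (\<Sum>i = 0..j. (if i = 0 then z * (deriv^^j) g z else 0) + (if i = 1 then of_nat j * (deriv^^(j-1)) g z else 0))"
      by (rule sum.cong) (simp_all only: higher_deriv_ident, auto)
    also have "\<dots> = z * (deriv^^j) g z + of_nat j * (deriv^^(j-1)) g z"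
      unfolding sum.distrib using Suc by (simp add: sum.delta)
    finally show ?thesis .
  qed
  finally show ?thesis .
qed

lemma eigen_j:
  assumes h: "holomorphic2_on P U V" and U: "open U" and V: "open V"
    and a_hol: "\<And>k. k \<le> r \<Longrightarrow> a k holomorphic_on U"
    and eig: "\<And>x z. x \<in> U \<Longrightarrow> z \<in> V \<Longrightarrow> diff_op r a (\<lambda>y. P y z) x = z * P x z"
    and x: "x \<in> U" and l: "l \<in> V"
  shows "diff_op r a (\<lambda>y. (Dz^^j) P y l) x = l * (Dz^^j) P x l + of_nat j * (Dz^^(j-1)) P x l"
proof -
  have hk: "(\<lambda>z. (Dx^^k) P x z) holomorphic_on V" for k
    using hol2_iter[OF h U V, of 0 k] x unfolding holomorphic2_on_def by auto
  have "diff_op r a (\<lambda>y. (Dz^^j) P y l) x = (\<Sum>k\<le>r. a k x * (Dx^^k) ((Dz^^j) P) x l)"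
    unfolding diff_op_def Dx_iter ..
  also have "\<dots> = (\<Sum>k\<le>r. a k x * (Dz^^j) ((Dx^^k) P) x l)"
    using comm[OF h U V x l] by simp
  also have "\<dots> = (\<Sum>k\<le>r. a k x * (deriv^^j) (\<lambda>z. (Dx^^k) P x z) l)"
    unfolding Dz_iter by simp
  also have "\<dots> = (deriv^^j) (\<lambda>z. \<Sum>k\<le>r. a k x * (Dx^^k) P x z) l"
    by (rule higher_deriv_sum_cmult[symmetric, OF V l]) (use hk in auto)
  also have "\<dots> = (deriv^^j) (\<lambda>z. z * P x z) l"
  proof (rule higher_deriv_cong_ev)
    have "\<forall>\<^sub>F z in nhds l. z \<in> V" using eventually_nhds_in_open[OF V l] .
    then show "\<forall>\<^sub>F z in nhds l. (\<Sum>k\<le>r. a k x * (Dx^^k) P x z) = z * P x z"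
      by eventually_elim (use eig[OF x] in \<open>auto simp: diff_op_def Dx_iter\<close>)
  qed simp
  also have "\<dots> = l * (deriv^^j) (P x) l + of_nat j * (deriv^^(j-1)) (P x) l"
    by (rule higher_deriv_zmult[OF V l]) (use h x in \<open>auto simp: holomorphic2_on_def\<close>)
  finally show ?thesis by (simp add: Dz_iter)
qed

lemma diff_op_sum:
  assumes U: "open U" and x: "x \<in> U" and fin: "finite K" and hol: "\<And>k. k \<in> K \<Longrightarrow> f k holomorphic_on U"
  shows "diff_op r a (\<lambda>y. \<Sum>k\<in>K. f k y) x = (\<Sum>k\<in>K. diff_op r a (f k) x)"
proof -
  have "(deriv^^m) (\<lambda>y. \<Sum>k\<in>K. f k y) x = (\<Sum>k\<in>K. (deriv^^m) (f k) x)" for m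
    using higher_deriv_sum_cmult[OF U x fin hol, where c="\<lambda>_. 1" and j=m] by simp
  then show ?thesis unfolding diff_op_def by (simp add: sum_distrib_left sum.swap[of _ K])
qed

lemma diff_op_cmult:
  assumes U: "open U" and x: "x \<in> U" and hol: "f holomorphic_on U"
  shows "diff_op r a (\<lambda>y. c * f y) x = c * diff_op r a f x"
  unfolding diff_op_def using higher_deriv_cmult[OF hol x U]
  by (simp add: sum_distrib_left mult_ac)

lemma diff_op_zero:
  assumes U: "open U" and x: "x \<in> U" and g: "\<And>y. y \<in> U \<Longrightarrow> g y = 0"
  shows "diff_op r a g x = 0"
proof -
  have "(deriv^^m) g x = (deriv^^m) (\<lambda>_. 0) x" for m
  proof (rule higher_deriv_cong_ev)
    show "\<forall>\<^sub>F y in nhds x. g y = 0"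
      using eventually_nhds_in_open[OF U x] by eventually_elim (use g in auto)
  qed simp
  then show ?thesis unfolding diff_op_def by simp
qed

lemma shift_sum:
  fixes d \<phi> :: "nat \<Rightarrow> complex"
  assumes d: "\<And>j. j \<ge> B \<Longrightarrow> d j = 0"
  shows "(\<Sum>j<B. d j * (l * \<phi> j + of_nat j * \<phi> (j-1))) - l0 * (\<Sum>j<B. d j * \<phi> j)
       = (\<Sum>j<B. ((l - l0) * d j + of_nat (Suc j) * d (Suc j)) * \<phi> j)"
proof -
  have key: "(\<Sum>j<B. d j * of_nat j * \<phi> (j-1)) = (\<Sum>j<B. of_nat (Suc j) * d (Suc j) * \<phi> j)"
  proof (cases B)
    case 0 then show ?thesis by simp
  next
    case (Suc B')
    have "(\<Sum>j<B. d j * of_nat j * \<phi> (j-1)) = (\<Sum>j<B'. d (Suc j) * of_nat (Suc j) * \<phi> j)"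
      unfolding Suc sum.lessThan_Suc_shift by simp
    also have "\<dots> = (\<Sum>j<B. of_nat (Suc j) * d (Suc j) * \<phi> j)"
      unfolding Suc using d[of "Suc B'"] Suc by (simp add: mult_ac)
    finally show ?thesis .
  qed
  have "(\<Sum>j<B. d j * (l * \<phi> j + of_nat j * \<phi> (j-1))) - l0 * (\<Sum>j<B. d j * \<phi> j)
     = (\<Sum>j<B. (l - l0) * d j * \<phi> j) + (\<Sum>j<B. d j * of_nat j * \<phi> (j-1))"
    by (simp add: sum_distrib_left sum.distrib[symmetric] sum_subtractf[symmetric] algebra_simps)
  also have "\<dots> = (\<Sum>j<B. ((l - l0) * d j + of_nat (Suc j) * d (Suc j)) * \<phi> j)"
    unfolding key by (simp add: sum.distrib[symmetric] algebra_simps)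
  finally show ?thesis .
qed

lemma dist_apply_eq:
  assumes fs: "fsupp_dist c" and sub: "{(l, j). c l j \<noteq> 0} \<subseteq> L \<times> {..<B}" and fin: "finite L"
  shows "dist_apply c psi x = (\<Sum>l\<in>L. \<Sum>j<B. c l j * (deriv^^j) (psi x) l)"
proof -
  have "dist_apply c psi x = (\<Sum>(l, j)\<in>L \<times> {..<B}. c l j * (deriv^^j) (psi x) l)"
    unfolding dist_apply_def
    by (rule sum.mono_neutral_left) (use fin sub in auto)
  also have "\<dots> = (\<Sum>l\<in>L. \<Sum>j<B. c l j * (deriv^^j) (psi x) l)"
    by (rule sum.cartesian_product[symmetric])
  finally show ?thesis .
qed

definition Gsum :: "nat \<Rightarrow> complex set \<Rightarrow> nat \<Rightarrow> (nat \<Rightarrow> nat \<Rightarrow> complex \<Rightarrow> complex \<Rightarrow> complex)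
   \<Rightarrow> (nat \<Rightarrow> complex \<Rightarrow> nat \<Rightarrow> complex) \<Rightarrow> complex \<Rightarrow> complex" where
  "Gsum r L B \<Phi> c x = (\<Sum>i<r. \<Sum>l\<in>L. \<Sum>j<B. c i l j * \<Phi> i j x l)"

definition shiftc :: "complex \<Rightarrow> (nat \<Rightarrow> complex \<Rightarrow> nat \<Rightarrow> complex) \<Rightarrow> nat \<Rightarrow> complex \<Rightarrow> nat \<Rightarrow> complex" where
  "shiftc l0 c i l j = (l - l0) * c i l j + of_nat (Suc j) * c i l (Suc j)"

lemma L_G:
  fixes \<Phi> :: "nat \<Rightarrow> nat \<Rightarrow> complex \<Rightarrow> complex \<Rightarrow> complex"
  assumes U: "open U" and x: "x \<in> U" and fin: "finite L" and LV: "L \<subseteq> V"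
    and hol: "\<And>i j l. i < r \<Longrightarrow> l \<in> V \<Longrightarrow> (\<lambda>y. \<Phi> i j y l) holomorphic_on U"
    and eig: "\<And>i j x l. i < r \<Longrightarrow> x \<in> U \<Longrightarrow> l \<in> V \<Longrightarrow>
               diff_op r a (\<lambda>y. \<Phi> i j y l) x = l * \<Phi> i j x l + of_nat j * \<Phi> i (j-1) x l"
    and van: "\<And>i l j. j \<ge> B \<Longrightarrow> c i l j = 0"
  shows "diff_op r a (Gsum r L B \<Phi> c) x - l0 * Gsum r L B \<Phi> c x = Gsum r L B \<Phi> (shiftc l0 c) x"
proof -
  have h3: "(\<lambda>y. c i l j * \<Phi> i j y l) holomorphic_on U" if "i < r" "l \<in> L" for i l j
    using hol[of i l j] that LV by (auto intro!: holomorphic_intros)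
  have h2: "(\<lambda>y. \<Sum>j<B. c i l j * \<Phi> i j y l) holomorphic_on U" if "i < r" "l \<in> L" for i l
    using h3 that by (intro holomorphic_on_sum[where f="\<lambda>j y. c i l j * \<Phi> i j y l"]) auto
  have h1: "(\<lambda>y. \<Sum>l\<in>L. \<Sum>j<B. c i l j * \<Phi> i j y l) holomorphic_on U" if "i < r" for i
    using h2 that by (intro holomorphic_on_sum[where f="\<lambda>l y. \<Sum>j<B. c i l j * \<Phi> i j y l"]) auto
  have "diff_op r a (Gsum r L B \<Phi> c) x = (\<Sum>i<r. diff_op r a (\<lambda>y. \<Sum>l\<in>L. \<Sum>j<B. c i l j * \<Phi> i j y l) x)"
    unfolding Gsum_def[abs_def] by (rule diff_op_sum[OF U x]) (use h1 in auto)
  also have "\<dots> = (\<Sum>i<r. \<Sum>l\<in>L. diff_op r a (\<lambda>y. \<Sum>j<B. c i l j * \<Phi> i j y l) x)"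
    by (rule sum.cong[OF refl], rule diff_op_sum[OF U x fin]) (use h2 in auto)
  also have "\<dots> = (\<Sum>i<r. \<Sum>l\<in>L. \<Sum>j<B. diff_op r a (\<lambda>y. c i l j * \<Phi> i j y l) x)"
    by (intro sum.cong[OF refl] diff_op_sum[OF U x]) (use h3 in auto)
  also have "\<dots> = (\<Sum>i<r. \<Sum>l\<in>L. \<Sum>j<B. c i l j * (l * \<Phi> i j x l + of_nat j * \<Phi> i (j-1) x l))"
  proof (intro sum.cong[OF refl])
    fix i l j assume i: "i \<in> {..<r}" and l: "l \<in> L"
    have "diff_op r a (\<lambda>y. c i l j * \<Phi> i j y l) x = c i l j * diff_op r a (\<lambda>y. \<Phi> i j y l) x"
      by (rule diff_op_cmult[OF U x hol]) (use i l LV in auto)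
    also have "\<dots> = c i l j * (l * \<Phi> i j x l + of_nat j * \<Phi> i (j-1) x l)"
      using eig[of i x l j] i l LV x by auto
    finally show "diff_op r a (\<lambda>y. c i l j * \<Phi> i j y l) x = c i l j * (l * \<Phi> i j x l + of_nat j * \<Phi> i (j-1) x l)" .
  qed
  finally have D: "diff_op r a (Gsum r L B \<Phi> c) x = (\<Sum>i<r. \<Sum>l\<in>L. \<Sum>j<B. c i l j * (l * \<Phi> i j x l + of_nat j * \<Phi> i (j-1) x l))" .
  have "diff_op r a (Gsum r L B \<Phi> c) x - l0 * Gsum r L B \<Phi> c x =
     (\<Sum>i<r. \<Sum>l\<in>L. (\<Sum>j<B. c i l j * (l * \<Phi> i j x l + of_nat j * \<Phi> i (j-1) x l)) - l0 * (\<Sum>j<B. c i l j * \<Phi> i j x l))"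
    unfolding D Gsum_def by (simp add: sum_distrib_left sum_subtractf)
  also have "\<dots> = Gsum r L B \<Phi> (shiftc l0 c) x"
    unfolding Gsum_def shiftc_def
    by (intro sum.cong[OF refl] shift_sum) (use van in auto)
  finally show ?thesis .
qed

lemma key_induct:
  fixes \<Phi> :: "nat \<Rightarrow> nat \<Rightarrow> complex \<Rightarrow> complex \<Rightarrow> complex"
  assumes U: "open U" and fin: "finite L" and LV: "L \<subseteq> V"
    and hol: "\<And>i j l. i < r \<Longrightarrow> l \<in> V \<Longrightarrow> (\<lambda>y. \<Phi> i j y l) holomorphic_on U"
    and eig: "\<And>i j x l. i < r \<Longrightarrow> x \<in> U \<Longrightarrow> l \<in> V \<Longrightarrow>
               diff_op r a (\<lambda>y. \<Phi> i j y l) x = l * \<Phi> i j x l + of_nat j * \<Phi> i (j-1) x l"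
    and indep: "\<And>l b. l \<in> V \<Longrightarrow> (\<forall>x\<in>U. (\<Sum>i<r. b i * \<Phi> i 0 x l) = 0) \<Longrightarrow> (\<forall>i<r. b i = 0)"
  shows "(\<forall>i l j. c i l j \<noteq> 0 \<longrightarrow> i < r \<and> l \<in> L \<and> j < n l) \<Longrightarrow> (\<forall>l\<in>L. n l \<le> B) \<Longrightarrow>
         sum n L \<le> N \<Longrightarrow> (\<forall>x\<in>U. Gsum r L B \<Phi> c x = 0) \<Longrightarrow> c i l j = 0"
proof (induction N arbitrary: c n i l j)
  case 0
  then have "\<forall>l\<in>L. n l = 0" using fin by simp
  then show ?case using "0.prems"(1) by fastforce
next
  case (Suc N)
  note supp = Suc.prems(1) and bnd = Suc.prems(2) and sumN = Suc.prems(3) and zero = Suc.prems(4)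
  show ?case
  proof (cases "\<forall>l\<in>L. n l = 0")
    case True then show ?thesis using supp by fastforce
  next
    case False
    then obtain l0 where l0: "l0 \<in> L" "n l0 > 0" by auto
    define n' where "n' = n(l0 := n l0 - 1)"
    define c' where "c' = shiftc l0 c"
    have van: "\<And>i l j. j \<ge> B \<Longrightarrow> c i l j = 0"
      using supp bnd by (meson leD less_le_trans)
    have supp': "\<forall>i l j. c' i l j \<noteq> 0 \<longrightarrow> i < r \<and> l \<in> L \<and> j < n' l"
    proof (intro allI impI)
      fix i l j assume "c' i l j \<noteq> 0"
      then have "(l - l0) * c i l j \<noteq> 0 \<or> c i l (Suc j) \<noteq> 0"
        unfolding c'_def shiftc_def by auto
      then show "i < r \<and> l \<in> L \<and> j < n' l"
      proof
        assume "(l - l0) * c i l j \<noteq> 0"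
        then have "l \<noteq> l0" "c i l j \<noteq> 0" by auto
        then show ?thesis using supp unfolding n'_def by auto
      next
        assume "c i l (Suc j) \<noteq> 0"
        then have "i < r \<and> l \<in> L \<and> Suc j < n l" using supp by blast
        then show ?thesis unfolding n'_def by auto
      qed
    qed
    have bnd': "\<forall>l\<in>L. n' l \<le> B" using bnd unfolding n'_def by auto
    have "sum n L = n l0 + sum n (L - {l0})" using sum.remove[OF fin l0(1)] .
    moreover have "sum n' L = n' l0 + sum n' (L - {l0})" using sum.remove[OF fin l0(1)] .
    moreover have "sum n' (L - {l0}) = sum n (L - {l0})" unfolding n'_def by (rule sum.cong) auto
    ultimately have sumN': "sum n' L \<le> N" using sumN l0(2) unfolding n'_def by simp
    have zero': "\<forall>x\<in>U. Gsum r L B \<Phi> c' x = 0"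
    proof
      fix x assume x: "x \<in> U"
      have "Gsum r L B \<Phi> c' x = diff_op r a (Gsum r L B \<Phi> c) x - l0 * Gsum r L B \<Phi> c x"
        unfolding c'_def by (rule L_G[OF U x fin LV hol eig van, symmetric]) auto
      also have "\<dots> = 0" using diff_op_zero[OF U x, of "Gsum r L B \<Phi> c"] zero x by simp
      finally show "Gsum r L B \<Phi> c' x = 0" .
    qed
    have c'0: "\<And>i l j. c' i l j = 0" using Suc.IH[OF supp' bnd' sumN' zero'] .
    have nz: "c i l j = 0" if "l \<noteq> l0" for i l j
    proof (rule ccontr)
      assume "c i l j \<noteq> 0"
      define J where "J = {j. c i l j \<noteq> 0}"
      have Jfin: "finite J" using van unfolding J_def
        by (metis (mono_tags, lifting) finite_lessThan finite_subset lessThan_iff mem_Collect_eq not_le subsetI)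
      have "j \<in> J" using \<open>c i l j \<noteq> 0\<close> unfolding J_def by auto
      then have mJ: "Max J \<in> J" using Jfin Max_in by auto
      have "Suc (Max J) \<notin> J" using Jfin Max_ge not_less_eq_eq by blast
      then have "c' i l (Max J) = (l - l0) * c i l (Max J)" unfolding c'_def shiftc_def J_def by simp
      moreover have "(l - l0) * c i l (Max J) \<noteq> 0" using mJ that unfolding J_def by auto
      ultimately show False using c'0 by simp
    qed
    have s1: "c i l0 (Suc j) = 0" for i j
      using c'0[of i l0 j] unfolding c'_def shiftc_def by (simp del: of_nat_Suc)
    have B0: "0 < B" using l0 bnd by fastforce
    have "\<forall>i<r. c i l0 0 = 0"
    proof (rule indep)
      show "l0 \<in> V" using l0 LV by auto
      show "\<forall>x\<in>U. (\<Sum>i<r. c i l0 0 * \<Phi> i 0 x l0) = 0"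
      proof
        fix x assume x: "x \<in> U"
        have inner: "(\<Sum>j<B. c i l j * \<Phi> i j x l) = (if l = l0 then c i l0 0 * \<Phi> i 0 x l0 else 0)" for i l
        proof (cases "l = l0")
          case True
          have "(\<Sum>j<B. c i l j * \<Phi> i j x l) = (\<Sum>j<B. if j = 0 then c i l0 0 * \<Phi> i 0 x l0 else 0)"
            by (rule sum.cong[OF refl]) (use True s1 in \<open>auto simp: gr0_conv_Suc\<close>)
          also have "\<dots> = c i l0 0 * \<Phi> i 0 x l0" using B0 by (simp add: sum.delta)
          finally show ?thesis using True by simp
        next
          case False then show ?thesis using nz by simp
        qed
        have "Gsum r L B \<Phi> c x = (\<Sum>i<r. c i l0 0 * \<Phi> i 0 x l0)"
          unfolding Gsum_def inner using l0(1) fin by (simp add: sum.delta)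
        then show "(\<Sum>i<r. c i l0 0 * \<Phi> i 0 x l0) = 0" using zero x by simp
      qed
    qed
    then show ?thesis
    proof (cases "l = l0")
      case True
      then show ?thesis
      proof (cases j)
        case 0
        then show ?thesis using True \<open>\<forall>i<r. c i l0 0 = 0\<close> supp by blast
      next
        case (Suc k) then show ?thesis using True s1 by simp
      qed
    next
      case False then show ?thesis using nz by simp
    qed
  qed
qed

theorem mainTheorem3:
  fixes U V :: "complex set" and r :: nat
    and a :: "nat \<Rightarrow> complex \<Rightarrow> complex"
    and psi :: "nat \<Rightarrow> complex \<Rightarrow> complex \<Rightarrow> complex"
  assumes U_open: "open U" and U_ne: "U \<noteq> {}"
    and V_open: "open V"
    and a_hol: "\<And>k. k \<le> r \<Longrightarrow> a k holomorphic_on U"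
    and order_r: "\<exists>x\<in>U. a r x \<noteq> 0"
    and psi_hol: "\<And>i. i < r \<Longrightarrow> holomorphic2_on (psi i) U V"
    and eigen: "\<And>i x z. i < r \<Longrightarrow> x \<in> U \<Longrightarrow> z \<in> V \<Longrightarrow>
                   diff_op r a (\<lambda>y. psi i y z) x = z * psi i x z"
    and indep: "\<And>lam b. lam \<in> V \<Longrightarrow> (\<forall>x\<in>U. (\<Sum>i<r. b i * psi i x lam) = 0) \<Longrightarrow>
                   (\<forall>i<r. b i = 0)"
  shows "inj_on (\<lambda>cs. restrict (\<lambda>x. \<Sum>i<r. dist_apply (cs i) (psi i) x) U)
           {cs :: nat \<Rightarrow> complex \<Rightarrow> nat \<Rightarrow> complex.
              (\<forall>i<r. cs i \<in> dist_space V) \<and> (\<forall>i\<ge>r. cs i = (\<lambda>_ _. 0))}"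
proof -
  define \<Phi> where "\<Phi> = (\<lambda>i j. (Dz^^j) (psi i))"
  have hol: "(\<lambda>y. \<Phi> i j y l) holomorphic_on U" if "i < r" "l \<in> V" for i j l
    using hol2_iter[OF psi_hol[OF that(1)] U_open V_open, of j 0] that(2)
    unfolding holomorphic2_on_def \<Phi>_def by auto
  have eig: "diff_op r a (\<lambda>y. \<Phi> i j y l) x = l * \<Phi> i j x l + of_nat j * \<Phi> i (j-1) x l"
    if "i < r" "x \<in> U" "l \<in> V" for i j x l
    unfolding \<Phi>_def by (rule eigen_j[OF psi_hol[OF that(1)] U_open V_open a_hol eigen[OF that(1)] that(2,3)])
  have indep': "\<forall>i<r. b i = 0" if "l \<in> V" "\<forall>x\<in>U. (\<Sum>i<r. b i * \<Phi> i 0 x l) = 0" for l b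
    using indep[OF that(1)] that(2) unfolding \<Phi>_def by simp
  show ?thesis unfolding inj_on_def
  proof (intro ballI impI)
    fix cs ds assume cs: "cs \<in> {cs. (\<forall>i<r. cs i \<in> dist_space V) \<and> (\<forall>i\<ge>r. cs i = (\<lambda>_ _. 0))}"
      and ds: "ds \<in> {cs. (\<forall>i<r. cs i \<in> dist_space V) \<and> (\<forall>i\<ge>r. cs i = (\<lambda>_ _. 0))}"
      and eq: "restrict (\<lambda>x. \<Sum>i<r. dist_apply (cs i) (psi i) x) U = restrict (\<lambda>x. \<Sum>i<r. dist_apply (ds i) (psi i) x) U"
    have eqx: "(\<Sum>i<r. dist_apply (cs i) (psi i) x) = (\<Sum>i<r. dist_apply (ds i) (psi i) x)" if "x \<in> U" for x
      using fun_cong[OF eq, of x] that by simp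
    define S where "S = (\<lambda>c :: complex \<Rightarrow> nat \<Rightarrow> complex. {(l, j). c l j \<noteq> 0})"
    have finS: "finite (S (cs i))" "finite (S (ds i))" if "i < r" for i
      using cs ds that unfolding S_def dist_space_def fsupp_dist_def by auto
    have fsd: "fst ` S e \<subseteq> dist_support e" for e unfolding S_def dist_support_def by auto
    have supV: "fst ` S (cs i) \<subseteq> V" "fst ` S (ds i) \<subseteq> V" if "i < r" for i
    proof -
      have "dist_support (cs i) \<subseteq> V" "dist_support (ds i) \<subseteq> V" using cs ds that unfolding dist_space_def by auto
      then show "fst ` S (cs i) \<subseteq> V" "fst ` S (ds i) \<subseteq> V" using fsd[of "cs i"] fsd[of "ds i"] by blast+
    qed
    define L where "L = (\<Union>i<r. fst ` S (cs i) \<union> fst ` S (ds i))"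
    define JJ where "JJ = (\<Union>i<r. snd ` S (cs i) \<union> snd ` S (ds i))"
    have finL: "finite L" unfolding L_def using finS by auto
    have LV: "L \<subseteq> V" unfolding L_def using supV by force
    have "finite JJ" unfolding JJ_def using finS by auto
    then obtain B where B: "JJ \<subseteq> {..<B}" using finite_nat_bounded by blast
    have subLB: "S (cs i) \<subseteq> L \<times> {..<B}" "S (ds i) \<subseteq> L \<times> {..<B}" if "i < r" for i
      using that B unfolding L_def JJ_def by force+
    have da: "dist_apply e (psi i) x = (\<Sum>l\<in>L. \<Sum>j<B. e l j * \<Phi> i j x l)"
      if "fsupp_dist e" "S e \<subseteq> L \<times> {..<B}" for i x e
    proof -
      have "dist_apply e (psi i) x = (\<Sum>l\<in>L. \<Sum>j<B. e l j * (deriv^^j) (psi i x) l)"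
        by (rule dist_apply_eq[OF that(1) _ finL]) (use that(2) in \<open>simp add: S_def\<close>)
      then show ?thesis unfolding \<Phi>_def Dz_iter .
    qed
    define c where "c = (\<lambda>i l j. cs i l j - ds i l j)"
    have zero: "\<forall>x\<in>U. Gsum r L B \<Phi> c x = 0"
    proof
      fix x assume x: "x \<in> U"
      have "Gsum r L B \<Phi> c x = (\<Sum>i<r. dist_apply (cs i) (psi i) x) - (\<Sum>i<r. dist_apply (ds i) (psi i) x)"
      proof -
        have "dist_apply (cs i) (psi i) x - dist_apply (ds i) (psi i) x = (\<Sum>l\<in>L. \<Sum>j<B. c i l j * \<Phi> i j x l)"
          if i: "i < r" for i
        proof -
          have "fsupp_dist (cs i)" "fsupp_dist (ds i)" using cs ds i unfolding dist_space_def by auto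
          then show ?thesis
            by (simp add: da[OF _ subLB(1)[OF i]] da[OF _ subLB(2)[OF i]] c_def sum_subtractf[symmetric] left_diff_distrib)
        qed
        then show ?thesis unfolding Gsum_def by (simp add: sum_subtractf[symmetric])
      qed
      then show "Gsum r L B \<Phi> c x = 0" using eqx[OF x] by simp
    qed
    have supp: "\<forall>i l j. c i l j \<noteq> 0 \<longrightarrow> i < r \<and> l \<in> L \<and> j < (\<lambda>_. B) l"
    proof (intro allI impI)
      fix i l j assume nz: "c i l j \<noteq> 0"
      have ir: "i < r"
      proof (rule ccontr)
        assume "\<not> i < r"
        then have "cs i = (\<lambda>_ _. 0)" "ds i = (\<lambda>_ _. 0)" using cs ds by auto
        then show False using nz unfolding c_def by simp
      qed
      have "(l, j) \<in> S (cs i) \<or> (l, j) \<in> S (ds i)" using nz unfolding c_def S_def by auto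
      then show "i < r \<and> l \<in> L \<and> j < (\<lambda>_. B) l" using subLB[OF ir] ir by auto
    qed
    have c0: "c i l j = 0" for i l j
      by (rule key_induct[OF U_open finL LV hol eig indep' supp _ order_refl zero]) auto
    show "cs = ds"
      using c0 unfolding c_def by (auto simp: fun_eq_iff)
  qed
qed

end
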